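(* Let $(t^n)_{n=0}^{N_T}$ be a strictly increasing sequence of times and, for sequences $(z(n))_n$ in a vector space, let $\delta_t^{n+1}z:=(z(n+1)-z(n))/(t^{n+1}-t^n)$. Let, for $i=1,2,3$ and $n=0,\dots,N_T$, $\underline{\star_c\theta}^i_h(n)\in\underline X^2_{r,h}$ and $\underline{\star_cB}^i_h(n)\in\underline X^1_{r,h}$ (together with $\underline{\star_cD}^i_h(n)\in\underline X^1_{r,h}$) be a solution of the three-field scheme, so that in particular, for every $n$ and $i$, there is an element $\underline{\mathcal E}^i(n+1)\in\underline X^2_{r,h}$ (namely $N(n)\,\underline{\star_cE}^i_h(\underline{\star_cD}_h(n+1),\underline{\star_c\theta}_h(n))$, the same element in both equations) such that $$(\delta_t^{n+1}\underline{\star_c\theta}^i_h,\underline w_h)_{2,h}=(\underline{\mathcal E}^i(n+1),\underline w_h)_{2,h}\quad\forall\underline w_h\in\underline X^2_{r,h},$$ $$(\delta_t^{n+1}\underline{\star_cB}^i_h,\underline v_h)_{1,h}-(\underline{\mathcal E}^i(n+1),\underline d^1_{r,h}\underline v_h)_{2,h}=0\quad\forall\underline v_h\in\underline X^1_{r,h}.$$ Define, for $\underline u_h\in\underline X^1_{r,h}$ and $\underline p_h\in\underline X^0_{r,h}$, $$\mathfrak C^i_1(n,\underline u_h):=(\underline{\star_c\theta}^i_h(n),\underline d^1_{r,h}\underline u_h)_{2,h}-(\underline{\star_cB}^i_h(n),\underline u_h)_{1,h},\qquad \mathfrak C^i_2(n,\underline p_h):=(\underline{\star_cB}^i_h(n),\underline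 d^0_{r,h}\underline p_h)_{1,h}.$$ Then for every fixed $\underline u_h$ and $\underline p_h$, the quantities $\mathfrak C^i_1(n,\underline u_h)$ and $\mathfrak C^i_2(n,\underline p_h)$ are independent of $n\in\{0,\dots,N_T\}$.
   Context: $\underline X^k_{r,h}$, $k=0,1,2,3$, are the spaces of the exterior calculus discrete de Rham (ECDDR) complex of polynomial degree $r$ on a polytopal mesh of a domain in $\mathbb R^3$: finite-dimensional real vector spaces connected by linear discrete exterior derivatives $\underline d^k_{r,h}:\underline X^k_{r,h}\to\underline X^{k+1}_{r,h}$ satisfying the complex property $\underline d^{k+1}_{r,h}\circ\underline d^k_{r,h}=0$. Each $\underline X^k_{r,h}$ carries a discrete $L^2$-product $(\cdot,\cdot)_{k,h}$, a symmetric positive definite bilinear form (built from potential reconstructions plus a stabilisation term). $N(n)$ is the lapse at time $t^n$, and $\star_c$ denotes the constant Euclidean Hodge star of $\mathbb R^3$; the underlined symbols denote the discrete unknowns approximating $\star_c\theta^i$, $\star_cB^i$, $\star_cD^i$. *)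

theory Defs
  imports "HOL-Analysis.Analysis"
begin

definition spd_form :: "('a::real_vector \<Rightarrow> 'a \<Rightarrow> real) \<Rightarrow> bool" where
  "spd_form ip \<longleftrightarrow> bilinear ip \<and> (\<forall>x y. ip x y = ip y x) \<and> (\<forall>x. x \<noteq> 0 \<longrightarrow> ip x x > 0)"

definition dt :: "(nat \<Rightarrow> real) \<Rightarrow> (nat \<Rightarrow> 'a::real_vector) \<Rightarrow> nat \<Rightarrow> 'a" where
  "dt t z n = (1 / (t (Suc n) - t n)) *\<^sub>R (z (Suc n) - z n)"

end

theory Submission
  imports Defs
begin

theorem proposition6p1:
  fixes d0 :: "'x0::euclidean_space \<Rightarrow> 'x1::euclidean_space"
    and d1 :: "'x1 \<Rightarrow> 'x2::euclidean_space"
    and d2 :: "'x2 \<Rightarrow> 'x3::euclidean_space"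
    and ip0 :: "'x0 \<Rightarrow> 'x0 \<Rightarrow> real"
    and ip1 :: "'x1 \<Rightarrow> 'x1 \<Rightarrow> real"
    and ip2 :: "'x2 \<Rightarrow> 'x2 \<Rightarrow> real"
    and ip3 :: "'x3 \<Rightarrow> 'x3 \<Rightarrow> real"
    and t :: "nat \<Rightarrow> real" and NT :: nat
    and theta :: "nat \<Rightarrow> nat \<Rightarrow> 'x2"
    and B :: "nat \<Rightarrow> nat \<Rightarrow> 'x1"
    and D :: "nat \<Rightarrow> nat \<Rightarrow> 'x1"
    and E :: "nat \<Rightarrow> nat \<Rightarrow> 'x2"
  assumes "linear d0" and "linear d1" and "linear d2"
    and "\<And>p. d1 (d0 p) = 0" and "\<And>u. d2 (d1 u) = 0"
    and "spd_form ip0" and "spd_form ip1" and "spd_form ip2" and "spd_form ip3"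
    and "\<And>n. n < NT \<Longrightarrow> t n < t (Suc n)"
    and theta_eq: "\<And>i n w. i \<in> {1,2,3} \<Longrightarrow> n < NT \<Longrightarrow>
        ip2 (dt t (theta i) n) w = ip2 (E i (Suc n)) w"
    and B_eq: "\<And>i n v. i \<in> {1,2,3} \<Longrightarrow> n < NT \<Longrightarrow>
        ip1 (dt t (B i) n) v - ip2 (E i (Suc n)) (d1 v) = 0"
    and "i \<in> {1,2,3}" and "n \<le> NT"
  shows "ip2 (theta i n) (d1 u) - ip1 (B i n) u = ip2 (theta i 0) (d1 u) - ip1 (B i 0) u
         \<and> ip1 (B i n) (d0 p) = ip1 (B i 0) (d0 p)"
proof -
  have bl1: "bilinear ip1" and bl2: "bilinear ip2" using assms(7,8) by (auto simp: spd_form_def)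
  have lin1: "linear (\<lambda>x. ip1 x y)" for y using bl1 by (simp add: bilinear_def)
  have lin2: "linear (\<lambda>x. ip2 x y)" for y using bl2 by (simp add: bilinear_def)
  have lin2r: "linear (\<lambda>y. ip2 x y)" for x using bl2 by (simp add: bilinear_def)
  have d1d0: "d1 (d0 p) = 0" by fact
  have lin_dt1: "ip1 (dt t z k) y = (1 / (t (Suc k) - t k)) * (ip1 (z (Suc k)) y - ip1 (z k) y)" for z k y
    unfolding dt_def using linear_scale[OF lin1[of y]] linear_diff[OF lin1[of y]] by simp
  have lin_dt2: "ip2 (dt t z k) y = (1 / (t (Suc k) - t k)) * (ip2 (z (Suc k)) y - ip2 (z k) y)" for z k y
    unfolding dt_def using linear_scale[OF lin2[of y]] linear_diff[OF lin2[of y]] by simp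
  have step: "ip2 (theta i (Suc k)) (d1 u) - ip1 (B i (Suc k)) u = ip2 (theta i k) (d1 u) - ip1 (B i k) u
         \<and> ip1 (B i (Suc k)) (d0 p) = ip1 (B i k) (d0 p)" if k: "k < NT" for k
  proof -
    have pos: "t (Suc k) - t k \<noteq> 0" using assms(10)[OF k] by simp
    have a: "ip2 (dt t (theta i) k) (d1 u) = ip1 (dt t (B i) k) u"
      using theta_eq[OF assms(13) k, of "d1 u"] B_eq[OF assms(13) k, of u] by simp
    have b: "ip1 (dt t (B i) k) (d0 p) = 0"
      using B_eq[OF assms(13) k, of "d0 p"] d1d0 linear_0[OF lin2r] by simp
    from a pos have "ip2 (theta i (Suc k)) (d1 u) - ip2 (theta i k) (d1 u) = ip1 (B i (Suc k)) u - ip1 (B i k) u"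
      unfolding lin_dt1 lin_dt2 by (simp add: field_simps)
    moreover from b pos have "ip1 (B i (Suc k)) (d0 p) - ip1 (B i k) (d0 p) = 0"
      unfolding lin_dt1 by simp
    ultimately show ?thesis by simp
  qed
  have main: "m \<le> NT \<Longrightarrow> ip2 (theta i m) (d1 u) - ip1 (B i m) u = ip2 (theta i 0) (d1 u) - ip1 (B i 0) u
         \<and> ip1 (B i m) (d0 p) = ip1 (B i 0) (d0 p)" for m
  proof (induction m)
    case 0 then show ?case by simp
  next
    case (Suc m) then show ?case using step[of m] by auto
  qed
  show ?thesis using main assms(14) by blast
qed

end
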